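(* Let $\mathfrak a$ be an ideal of a commutative ring $R$. (1) Let $f,g_1,\dots,g_k\in R[X]$ be monic with $f=g_1\cdots g_k$. If each $g_i$ is $\mathfrak a$-Weierstrass, then $f$ is $\mathfrak a$-Weierstrass. (2) Let $f,g_1,\dots,g_k\in R[[X]]$ with $f=g_1\cdots g_k$ and let $n\ge0$. If each $g_i$ is $\mathfrak a$-distinguished of order $n_i$ for some integers $n_i\ge0$ with $n=n_1+\cdots+n_k$, then $f$ is $\mathfrak a$-distinguished of order $n$. Moreover, if $\mathfrak a$ is prime, the converses of (1) and (2) hold: in (1), if $f$ is $\mathfrak a$-Weierstrass then each $g_i$ is $\mathfrak a$-Weierstrass; in (2), if $f$ is $\mathfrak a$-distinguished of order $n$ then each $g_i$ is $\mathfrak a$-distinguished of some order $n_i$ with $n=n_1+\cdots+n_k$.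
   Context: A polynomial $f\in R[X]$ is $\mathfrak a$-Weierstrass if it is monic and its coefficients of $X^i$ for $i<\deg f$ lie in $\mathfrak a$. A series $f\in R[[X]]$ is $\mathfrak a$-distinguished of order $n$ if the coefficient of $X^n$ is a unit modulo $\mathfrak a$ and the coefficients of $X^i$ for $i<n$ lie in $\mathfrak a$. *)

theory Defs
  imports "HOL-Computational_Algebra.Polynomial" "HOL-Computational_Algebra.Formal_Power_Series"
begin

definition is_ideal :: "'a::comm_ring_1 set \<Rightarrow> bool" where
  "is_ideal I \<longleftrightarrow> 0 \<in> I \<and> (\<forall>x\<in>I. \<forall>y\<in>I. x + y \<in> I) \<and> (\<forall>r. \<forall>x\<in>I. r * x \<in> I)"

definition is_prime_ideal :: "'a::comm_ring_1 set \<Rightarrow> bool" where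
  "is_prime_ideal I \<longleftrightarrow> is_ideal I \<and> I \<noteq> UNIV \<and> (\<forall>x y. x * y \<in> I \<longrightarrow> x \<in> I \<or> y \<in> I)"

definition unit_mod :: "'a::comm_ring_1 set \<Rightarrow> 'a \<Rightarrow> bool" where
  "unit_mod I c \<longleftrightarrow> (\<exists>u. c * u - 1 \<in> I)"

definition monic_poly :: "'a::comm_ring_1 poly \<Rightarrow> bool" where
  "monic_poly p \<longleftrightarrow> lead_coeff p = 1"

definition weierstrass :: "'a::comm_ring_1 set \<Rightarrow> 'a poly \<Rightarrow> bool" where
  "weierstrass I f \<longleftrightarrow> monic_poly f \<and> (\<forall>i < degree f. coeff f i \<in> I)"

definition distinguished :: "'a::comm_ring_1 set \<Rightarrow> 'a fps \<Rightarrow> nat \<Rightarrow> bool" where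
  "distinguished I f n \<longleftrightarrow> unit_mod I (fps_nth f n) \<and> (\<forall>i < n. fps_nth f i \<in> I)"

end

theory Submission
  imports Defs
begin

lemma id_mult: "is_ideal a \<Longrightarrow> x \<in> a \<Longrightarrow> r * x \<in> a"
  by (auto simp: is_ideal_def)
lemma id_mult2: "is_ideal a \<Longrightarrow> x \<in> a \<Longrightarrow> x * r \<in> a"
  by (metis id_mult mult.commute)
lemma id_add: "is_ideal a \<Longrightarrow> x \<in> a \<Longrightarrow> y \<in> a \<Longrightarrow> x + y \<in> a"
  by (auto simp: is_ideal_def)
lemma id_zero: "is_ideal a \<Longrightarrow> 0 \<in> a"
  by (auto simp: is_ideal_def)
lemma id_neg: "is_ideal a \<Longrightarrow> x \<in> a \<Longrightarrow> - x \<in> a"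
  using id_mult[of a x "-1"] by simp
lemma id_diff: "is_ideal a \<Longrightarrow> x \<in> a \<Longrightarrow> y \<in> a \<Longrightarrow> x - y \<in> a"
  using id_add[of a x "-y"] id_neg[of a y] by simp
lemma id_sum: assumes I: "is_ideal a" and "finite S" and "\<forall>x\<in>S. f x \<in> a" shows "sum f S \<in> a"
  using assms(2,3)
proof (induction S rule: finite_induct)
  case empty then show ?case by (simp add: id_zero[OF I])
next
  case (insert x F) then show ?case by (simp add: id_add[OF I])
qed
lemma unit_mod_in: "is_ideal a \<Longrightarrow> unit_mod a c \<Longrightarrow> c \<in> a \<Longrightarrow> (1::'a::comm_ring_1) \<in> a"
proof -
  assume I: "is_ideal a" and u: "unit_mod a c" and c: "c \<in> a"
  obtain u where u: "c * u - 1 \<in> a" using u by (auto simp: unit_mod_def)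
  have "c * u \<in> a" using id_mult2[OF I c] .
  from id_diff[OF I this u] show ?thesis by simp
qed
lemma unit_mod_cong: "is_ideal a \<Longrightarrow> x - y \<in> a \<Longrightarrow> unit_mod a y \<Longrightarrow> unit_mod a (x::'a::comm_ring_1)"
proof -
  assume I: "is_ideal a" and d: "x - y \<in> a" and u: "unit_mod a y"
  obtain u where u: "y * u - 1 \<in> a" using u by (auto simp: unit_mod_def)
  have "(x - y) * u + (y * u - 1) \<in> a" using id_add[OF I id_mult2[OF I d] u] .
  moreover have "(x - y) * u + (y * u - 1) = x * u - 1" by (simp add: algebra_simps)
  ultimately show ?thesis by (auto simp: unit_mod_def)
qed
lemma unit_mod_mult: "is_ideal a \<Longrightarrow> unit_mod a x \<Longrightarrow> unit_mod a y \<Longrightarrow> unit_mod a (x * (y::'a::comm_ring_1))"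
proof -
  assume I: "is_ideal a" and ux: "unit_mod a x" and uy: "unit_mod a y"
  obtain u where u: "x * u - 1 \<in> a" using ux by (auto simp: unit_mod_def)
  obtain v where v: "y * v - 1 \<in> a" using uy by (auto simp: unit_mod_def)
  have "(x * u - 1) * (y * v) + (y * v - 1) \<in> a" using id_add[OF I id_mult2[OF I u] v] .
  moreover have "(x * u - 1) * (y * v) + (y * v - 1) = (x * y) * (u * v) - 1" by (simp add: algebra_simps)
  ultimately show ?thesis by (auto simp: unit_mod_def)
qed
lemma unit_mod_factor: "unit_mod a (x * y) \<Longrightarrow> unit_mod a (x::'a::comm_ring_1)"
  unfolding unit_mod_def by (metis mult.assoc)
lemma unit_mod_prod: assumes I: "is_ideal a" and "finite S" and "\<forall>i\<in>S. unit_mod a (c i)" shows "unit_mod a (prod c S :: 'a::comm_ring_1)"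
  using assms(2,3)
proof (induction S rule: finite_induct)
  case empty then show ?case by (auto simp: unit_mod_def intro!: exI[of _ 1] id_zero[OF I])
next
  case (insert x F) then show ?case by (auto intro: unit_mod_mult[OF I])
qed

lemma conv_low:
  fixes F G H :: "nat \<Rightarrow> 'a::comm_ring_1"
  assumes I: "is_ideal a" and H: "\<And>j. H j = (\<Sum>i\<le>j. F i * G (j-i))"
    and lf: "\<forall>i<m. F i \<in> a" and lg: "\<forall>i<n. G i \<in> a"
  shows "\<forall>j<m+n. H j \<in> a" "H (m+n) - F m * G n \<in> a"
proof -
  have t: "F i * G (j-i) \<in> a" if "i \<le> j" "j \<le> m+n" "i \<noteq> m \<or> j \<noteq> m+n" for i j
  proof (cases "i < m")
    case True then show ?thesis using lf id_mult2[OF I] by auto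
  next
    case False then have "j - i < n" using that by auto
    then show ?thesis using lg id_mult[OF I] by auto
  qed
  show "\<forall>j<m+n. H j \<in> a" unfolding H by (auto intro!: id_sum[OF I] t)
  have "H (m+n) = F m * G n + (\<Sum>i\<in>{..m+n}-{m}. F i * G (m+n-i))"
    unfolding H by (subst sum.remove[of _ m]) auto
  moreover have "(\<Sum>i\<in>{..m+n}-{m}. F i * G (m+n-i)) \<in> a"
    by (auto intro!: id_sum[OF I] t)
  ultimately show "H (m+n) - F m * G n \<in> a" by simp
qed

lemma conv_all:
  fixes F G H :: "nat \<Rightarrow> 'a::comm_ring_1"
  assumes I: "is_ideal a" and H: "\<And>j. H j = (\<Sum>i\<le>j. F i * G (j-i))"
    and lf: "\<forall>i. F i \<in> a"
  shows "H j \<in> a"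
  unfolding H by (intro id_sum[OF I]) (auto intro: id_mult2[OF I] simp: lf)

lemma fps_prod_low:
  fixes g :: "nat \<Rightarrow> 'a::comm_ring_1 fps"
  assumes I: "is_ideal a" and L: "\<forall>i<k. \<forall>j<ns i. fps_nth (g i) j \<in> a"
  shows "(\<forall>j<(\<Sum>i<k. ns i). fps_nth ((\<Prod>i<k. g i)) j \<in> a) \<and>
         fps_nth ((\<Prod>i<k. g i)) (\<Sum>i<k. ns i) - (\<Prod>i<k. fps_nth (g i) (ns i)) \<in> a"
  using L
proof (induction k)
  case 0 then show ?case by (simp add: id_zero[OF I])
next
  case (Suc k)
  let ?P = "\<Prod>i<k. g i" and ?m = "\<Sum>i<k. ns i" and ?c = "\<Prod>i<k. fps_nth (g i) (ns i)"
  from Suc have IH: "\<forall>j<?m. fps_nth (?P) j \<in> a" "fps_nth (?P) ?m - ?c \<in> a" by auto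
  have H: "\<And>j. fps_nth (?P * g k) j = (\<Sum>i\<le>j. fps_nth (?P) i * fps_nth (g k) (j-i))"
    by (simp add: fps_mult_nth atLeast0AtMost)
  note cl = conv_low[OF I H IH(1), of "ns k"]
  have lk: "\<forall>i<ns k. fps_nth (g k) i \<in> a" using Suc.prems by auto
  have "fps_nth (?P * g k) (?m + ns k) - fps_nth (?P) ?m * fps_nth (g k) (ns k) + (fps_nth (?P) ?m - ?c) * fps_nth (g k) (ns k) \<in> a"
    using id_add[OF I cl(2)[OF lk] id_mult2[OF I IH(2)]] .
  then show ?case using cl(1)[OF lk] by (simp add: algebra_simps)
qed

lemma poly_prod_low:
  fixes g :: "nat \<Rightarrow> 'a::comm_ring_1 poly"
  assumes I: "is_ideal a" and L: "\<forall>i<k. \<forall>j<ns i. coeff (g i) j \<in> a"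
  shows "(\<forall>j<(\<Sum>i<k. ns i). coeff (\<Prod>i<k. g i) j \<in> a) \<and>
         coeff (\<Prod>i<k. g i) (\<Sum>i<k. ns i) - (\<Prod>i<k. coeff (g i) (ns i)) \<in> a"
  using L
proof (induction k)
  case 0 then show ?case by (simp add: id_zero[OF I])
next
  case (Suc k)
  let ?P = "\<Prod>i<k. g i" and ?m = "\<Sum>i<k. ns i" and ?c = "\<Prod>i<k. coeff (g i) (ns i)"
  from Suc have IH: "\<forall>j<?m. coeff ?P j \<in> a" "coeff ?P ?m - ?c \<in> a" by auto
  have H: "\<And>j. coeff (?P * g k) j = (\<Sum>i\<le>j. coeff ?P i * coeff (g k) (j-i))"
    by (simp add: coeff_mult)
  note cl = conv_low[OF I H IH(1), of "ns k"]
  have lk: "\<forall>i<ns k. coeff (g k) i \<in> a" using Suc.prems by auto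
  have "coeff (?P * g k) (?m + ns k) - coeff ?P ?m * coeff (g k) (ns k) + (coeff ?P ?m - ?c) * coeff (g k) (ns k) \<in> a"
    using id_add[OF I cl(2)[OF lk] id_mult2[OF I IH(2)]] .
  then show ?case using cl(1)[OF lk] by (simp add: algebra_simps)
qed

lemma monic_prod:
  fixes g :: "nat \<Rightarrow> 'a::comm_ring_1 poly"
  assumes nz: "(1::'a) \<noteq> 0" and M: "\<forall>i<k. monic_poly (g i)"
  shows "monic_poly (\<Prod>i<k. g i) \<and> degree (\<Prod>i<k. g i) = (\<Sum>i<k. degree (g i))"
  using M
proof (induction k)
  case 0 then show ?case by (simp add: monic_poly_def)
next
  case (Suc k)
  let ?P = "\<Prod>i<k. g i"
  from Suc have IH: "lead_coeff ?P = 1" "degree ?P = (\<Sum>i<k. degree (g i))"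
    by (auto simp: monic_poly_def)
  have gk: "lead_coeff (g k) = 1" using Suc.prems by (auto simp: monic_poly_def)
  have c: "coeff (?P * g k) (degree ?P + degree (g k)) = 1"
    using coeff_mult_degree_sum[of ?P "g k"] IH gk by simp
  have d: "degree (?P * g k) = degree ?P + degree (g k)"
    using degree_mult_le[of ?P "g k"] le_degree[of "?P * g k"] c nz
    by (metis le_antisym)
  show ?case using c d IH by (simp add: monic_poly_def)
qed

lemma order_unique:
  fixes F :: "nat \<Rightarrow> 'a"
  assumes "\<forall>i<m. F i \<in> a" "F m \<notin> a" "\<forall>i<n. F i \<in> a" "F n \<notin> a"
  shows "m = n"
  using assms by (metis linorder_neqE_nat)

lemma prime_prod_notin:
  assumes P: "is_prime_ideal a" and "finite S" and "\<forall>i\<in>S. c i \<notin> a"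
  shows "prod c S \<notin> (a::'a::comm_ring_1 set)"
  using assms(2,3)
proof (induction S rule: finite_induct)
  case empty
  have "(1::'a) \<notin> a"
  proof
    assume "1 \<in> a"
    then have "\<forall>x. x \<in> a" using id_mult[of a 1] P by (auto simp: is_prime_ideal_def)
    then show False using P by (auto simp: is_prime_ideal_def)
  qed
  then show ?case by simp
next
  case (insert x F) then show ?case using P by (auto simp: is_prime_ideal_def)
qed

theorem lemma3p10:
  fixes a :: "'a::comm_ring_1 set"
  assumes "is_ideal a"
  shows
   "(\<forall>(f::'a poly) (g::nat \<Rightarrow> 'a poly) (k::nat).
        monic_poly f \<and> (\<forall>i<k. monic_poly (g i)) \<and> f = (\<Prod>i<k. g i) \<and>
        (\<forall>i<k. weierstrass a (g i)) \<longrightarrow> weierstrass a f)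
    \<and> (\<forall>(f::'a fps) (g::nat \<Rightarrow> 'a fps) (k::nat) (ns::nat \<Rightarrow> nat) (n::nat).
        f = (\<Prod>i<k. g i) \<and> (\<forall>i<k. distinguished a (g i) (ns i)) \<and> n = (\<Sum>i<k. ns i)
        \<longrightarrow> distinguished a f n)
    \<and> (is_prime_ideal a \<longrightarrow>
        (\<forall>(f::'a poly) (g::nat \<Rightarrow> 'a poly) (k::nat).
          monic_poly f \<and> (\<forall>i<k. monic_poly (g i)) \<and> f = (\<Prod>i<k. g i) \<and>
          weierstrass a f \<longrightarrow> (\<forall>i<k. weierstrass a (g i)))
      \<and> (\<forall>(f::'a fps) (g::nat \<Rightarrow> 'a fps) (k::nat) (n::nat).
          f = (\<Prod>i<k. g i) \<and> distinguished a f n \<longrightarrow>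
          (\<exists>ns::nat \<Rightarrow> nat. (\<forall>i<k. distinguished a (g i) (ns i)) \<and> n = (\<Sum>i<k. ns i))))"
proof (intro conjI)
  show "\<forall>(f::'a poly) (g::nat \<Rightarrow> 'a poly) (k::nat).
        monic_poly f \<and> (\<forall>i<k. monic_poly (g i)) \<and> f = (\<Prod>i<k. g i) \<and>
        (\<forall>i<k. weierstrass a (g i)) \<longrightarrow> weierstrass a f"
  proof (intro allI impI)
  fix f :: "'a poly" and g :: "nat \<Rightarrow> 'a poly" and k :: nat
  assume H: "monic_poly f \<and> (\<forall>i<k. monic_poly (g i)) \<and> f = (\<Prod>i<k. g i) \<and> (\<forall>i<k. weierstrass a (g i))"
  show "weierstrass a f"
  proof (cases "(1::'a) = 0")
    case True
    then have "\<And>x::'a. x = 0" by (metis mult_1_right mult_zero_right)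
    then have "\<And>x::'a. x \<in> a" using id_zero[OF assms] by metis
    then show ?thesis using H by (auto simp: weierstrass_def)
  next
    case False
    have L: "\<forall>i<k. \<forall>j<degree (g i). coeff (g i) j \<in> a" using H by (auto simp: weierstrass_def)
    have "degree f = (\<Sum>i<k. degree (g i))" using monic_prod[OF False, of k g] H by auto
    then show ?thesis using poly_prod_low[OF assms L] H by (auto simp: weierstrass_def)
  qed
  qed
next
  show "\<forall>(f::'a fps) (g::nat \<Rightarrow> 'a fps) (k::nat) (ns::nat \<Rightarrow> nat) (n::nat).
        f = (\<Prod>i<k. g i) \<and> (\<forall>i<k. distinguished a (g i) (ns i)) \<and> n = (\<Sum>i<k. ns i)
        \<longrightarrow> distinguished a f n"
  proof (intro allI impI)
    fix f :: "'a fps" and g :: "nat \<Rightarrow> 'a fps" and k :: nat and ns :: "nat \<Rightarrow> nat" and n :: nat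
    assume H: "f = (\<Prod>i<k. g i) \<and> (\<forall>i<k. distinguished a (g i) (ns i)) \<and> n = (\<Sum>i<k. ns i)"
    have L: "\<forall>i<k. \<forall>j<ns i. fps_nth (g i) j \<in> a" using H by (auto simp: distinguished_def)
    note pl = fps_prod_low[OF assms L]
    have u: "unit_mod a (\<Prod>i<k. fps_nth (g i) (ns i))"
      using H by (auto intro!: unit_mod_prod[OF assms] simp: distinguished_def)
    show "distinguished a f n" using pl unit_mod_cong[OF assms _ u] H by (auto simp: distinguished_def)
  qed
next
  show "is_prime_ideal a \<longrightarrow>
        (\<forall>(f::'a poly) (g::nat \<Rightarrow> 'a poly) (k::nat).
          monic_poly f \<and> (\<forall>i<k. monic_poly (g i)) \<and> f = (\<Prod>i<k. g i) \<and>
          weierstrass a f \<longrightarrow> (\<forall>i<k. weierstrass a (g i)))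
      \<and> (\<forall>(f::'a fps) (g::nat \<Rightarrow> 'a fps) (k::nat) (n::nat).
          f = (\<Prod>i<k. g i) \<and> distinguished a f n \<longrightarrow>
          (\<exists>ns::nat \<Rightarrow> nat. (\<forall>i<k. distinguished a (g i) (ns i)) \<and> n = (\<Sum>i<k. ns i)))" (is "_ \<longrightarrow> ?R")
  proof (rule impI)
  assume P: "is_prime_ideal a"
  have one: "(1::'a) \<notin> a"
  proof
    assume "1 \<in> a"
    then have "\<forall>x. x \<in> a" using id_mult[OF assms, of 1] by auto
    then show False using P by (auto simp: is_prime_ideal_def)
  qed
  have pr: "x \<in> a \<or> y \<in> a" if "x * y \<in> a" for x y :: 'a
    using P that by (auto simp: is_prime_ideal_def)
  {
    fix f :: "'a poly" and g :: "nat \<Rightarrow> 'a poly" and k :: nat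
    assume H: "monic_poly f \<and> (\<forall>i<k. monic_poly (g i)) \<and> f = (\<Prod>i<k. g i) \<and> weierstrass a f"
    define ns where "ns i = (LEAST j. coeff (g i) j \<notin> a)" for i
    have ex: "coeff (g i) (degree (g i)) \<notin> a" if "i < k" for i
      using H that one by (auto simp: monic_poly_def)
    have nsle: "ns i \<le> degree (g i)" if "i < k" for i
      unfolding ns_def using ex[OF that] by (rule Least_le)
    have nsn: "coeff (g i) (ns i) \<notin> a" if "i < k" for i
      unfolding ns_def using ex[OF that] by (rule LeastI)
    have L: "\<forall>i<k. \<forall>j<ns i. coeff (g i) j \<in> a"
      unfolding ns_def using not_less_Least by blast
    note pl = poly_prod_low[OF assms L]
    have cn: "(\<Prod>i<k. coeff (g i) (ns i)) \<notin> a"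
      by (rule prime_prod_notin[OF P]) (use nsn in auto)
    have d: "coeff f (\<Sum>i<k. ns i) - (\<Prod>i<k. coeff (g i) (ns i)) \<in> a" using pl H by auto
    have fn: "coeff f (\<Sum>i<k. ns i) \<notin> a"
    proof
      assume "coeff f (\<Sum>i<k. ns i) \<in> a"
      from id_diff[OF assms this d] cn show False by simp
    qed
    have nz: "(1::'a) \<noteq> 0" using one id_zero[OF assms] by auto
    have df: "degree f = (\<Sum>i<k. degree (g i))" using monic_prod[OF nz, of k g] H by auto
    have fd: "coeff f (degree f) \<notin> a" using H one by (auto simp: weierstrass_def monic_poly_def)
    have "(\<Sum>i<k. ns i) = degree f"
    proof -
      have f1: "\<forall>j<(\<Sum>i<k. ns i). coeff f j \<in> a" using pl H by simp
      have f3: "\<forall>j<degree f. coeff f j \<in> a" using H unfolding weierstrass_def by blast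
      show ?thesis using order_unique[OF f1 fn f3 fd] .
    qed
    then have seq: "(\<Sum>i<k. ns i) = (\<Sum>i<k. degree (g i))" using df by simp
    have eq: "ns i = degree (g i)" if "i < k" for i
    proof (rule ccontr)
      assume "ns i \<noteq> degree (g i)"
      then have "ns i < degree (g i)" using nsle[OF that] by simp
      then have "(\<Sum>i<k. ns i) < (\<Sum>i<k. degree (g i))"
        using that nsle by (intro sum_strict_mono_ex1) auto
      then show False using seq by simp
    qed
    have "\<forall>i<k. weierstrass a (g i)" using H L eq by (auto simp: weierstrass_def)
  }
  then have c3: "\<forall>(f::'a poly) (g::nat \<Rightarrow> 'a poly) (k::nat). monic_poly f \<and> (\<forall>i<k. monic_poly (g i)) \<and> f = (\<Prod>i<k. g i) \<and> weierstrass a f \<longrightarrow>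
        (\<forall>i<k. weierstrass a (g i))" by blast
  {
    fix f :: "'a fps" and g :: "nat \<Rightarrow> 'a fps" and k :: nat and n :: nat
    assume H: "f = (\<Prod>i<k. g i) \<and> distinguished a f n"
    have fnu: "unit_mod a (fps_nth f n)" using H by (auto simp: distinguished_def)
    have fn: "fps_nth f n \<notin> a" using unit_mod_in[OF assms fnu] one by auto
    have ex: "\<exists>j. fps_nth (g i) j \<notin> a" if "i < k" for i
    proof (rule ccontr)
      assume "\<not> ?thesis"
      then have all: "\<forall>j. fps_nth (g i) j \<in> a" by auto
      have "f = g i * (\<Prod>j\<in>{..<k}-{i}. g j)" using H that prod.remove[of "{..<k}" i g] by simp
      then have "fps_nth f n \<in> a"
        using conv_all[OF assms _ all, of "fps_nth f" "fps_nth (\<Prod>j\<in>{..<k}-{i}. g j)" n]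
        by (simp add: fps_mult_nth atLeast0AtMost)
      then show False using fn by simp
    qed
    define ns where "ns i = (LEAST j. fps_nth (g i) j \<notin> a)" for i
    have nsn: "fps_nth (g i) (ns i) \<notin> a" if "i < k" for i
      unfolding ns_def using ex[OF that] by (metis LeastI)
    have L: "\<forall>i<k. \<forall>j<ns i. fps_nth (g i) j \<in> a"
      unfolding ns_def using not_less_Least by blast
    note pl = fps_prod_low[OF assms L]
    have cn: "(\<Prod>i<k. fps_nth (g i) (ns i)) \<notin> a"
      by (rule prime_prod_notin[OF P]) (use nsn in auto)
    have d: "fps_nth f (\<Sum>i<k. ns i) - (\<Prod>i<k. fps_nth (g i) (ns i)) \<in> a" using pl H by auto
    have fn2: "fps_nth f (\<Sum>i<k. ns i) \<notin> a"
    proof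
      assume "fps_nth f (\<Sum>i<k. ns i) \<in> a"
      from id_diff[OF assms this d] cn show False by simp
    qed
    have sn: "(\<Sum>i<k. ns i) = n"
    proof -
      have f1: "\<forall>j<(\<Sum>i<k. ns i). fps_nth f j \<in> a" using pl H by simp
      have f3: "\<forall>j<n. fps_nth f j \<in> a" using H unfolding distinguished_def by blast
      show ?thesis using order_unique[OF f1 fn2 f3 fn] .
    qed
    have d': "(\<Prod>i<k. fps_nth (g i) (ns i)) - fps_nth f n \<in> a"
      using id_neg[OF assms d] sn by simp
    have up: "unit_mod a (\<Prod>i<k. fps_nth (g i) (ns i))" using unit_mod_cong[OF assms d' fnu] .
    have ui: "unit_mod a (fps_nth (g i) (ns i))" if "i < k" for i
    proof -
      have "(\<Prod>i<k. fps_nth (g i) (ns i)) = fps_nth (g i) (ns i) * (\<Prod>j\<in>{..<k}-{i}. fps_nth (g j) (ns j))"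
        using that prod.remove[of "{..<k}" i "\<lambda>i. fps_nth (g i) (ns i)"] by simp
      then show ?thesis using up unit_mod_factor by metis
    qed
    have "\<exists>ns::nat \<Rightarrow> nat. (\<forall>i<k. distinguished a (g i) (ns i)) \<and> n = (\<Sum>i<k. ns i)"
      using L ui sn by (auto simp: distinguished_def intro!: exI[of _ ns])
  }
  then have c4: "\<forall>(f::'a fps) (g::nat \<Rightarrow> 'a fps) (k::nat) (n::nat). f = (\<Prod>i<k. g i) \<and> distinguished a f n \<longrightarrow>
          (\<exists>ns::nat \<Rightarrow> nat. (\<forall>i<k. distinguished a (g i) (ns i)) \<and> n = (\<Sum>i<k. ns i))" by blast
  from c3 c4 show ?R by (rule conjI)
  qed
qed

end
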